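(* Let $(K,v)$ be an extremal valued field with value group $\Gamma$. Then for every nonzero convex subgroup $\Delta$ of $\Gamma$, the quotient $\Gamma/\Delta$ is divisible.
   Context: $(K,v)$ with valuation ring $\mathcal{O}_v$ and value group $\Gamma$ (and $v(0)=\infty$) is extremal if for every $n\ge1$ and every $F\in K[X_1,\dots,X_n]$ the set $\{v(F(a_1,\dots,a_n)) : a_i\in\mathcal{O}_v\}\subseteq\Gamma\cup\{\infty\}$ has a maximal element. *)

theory Defs
  imports Main "HOL-Library.Poly_Mapping"
begin

text \<open>A (Krull) valuation on a field K with value group the whole type 'g:
  v is only meaningful on nonzero elements; v 0 is read as infinity.\<close>
definition valuation :: "('a::field \<Rightarrow> 'g::linordered_ab_group_add) \<Rightarrow> bool" where
  "valuation v \<longleftrightarrow>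
     (\<forall>x y. x \<noteq> 0 \<and> y \<noteq> 0 \<longrightarrow> v (x * y) = v x + v y) \<and>
     (\<forall>x y. x \<noteq> 0 \<and> y \<noteq> 0 \<and> x + y \<noteq> 0 \<longrightarrow> min (v x) (v y) \<le> v (x + y)) \<and>
     v ` (UNIV - {0}) = UNIV"

definition val_ring :: "('a::field \<Rightarrow> 'g::linordered_ab_group_add) \<Rightarrow> 'a set" where
  "val_ring v = {x. x = 0 \<or> 0 \<le> v x}"

text \<open>Multivariate polynomials: finitely supported maps from monomials (exponent vectors)
  to coefficients. F lies in K[X_0,...,X_{n-1}] iff all its monomials only use variables below n.\<close>
definition in_vars :: "nat \<Rightarrow> ((nat \<Rightarrow>\<^sub>0 nat) \<Rightarrow>\<^sub>0 'a::zero) \<Rightarrow> bool" where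
  "in_vars n F \<longleftrightarrow> (\<forall>m \<in> Poly_Mapping.keys F. Poly_Mapping.keys m \<subseteq> {..<n})"

definition mpeval :: "((nat \<Rightarrow>\<^sub>0 nat) \<Rightarrow>\<^sub>0 'a::comm_semiring_1) \<Rightarrow> (nat \<Rightarrow> 'a) \<Rightarrow> 'a" where
  "mpeval F a = (\<Sum>m \<in> Poly_Mapping.keys F.
      Poly_Mapping.lookup F m * (\<Prod>i \<in> Poly_Mapping.keys m. a i ^ Poly_Mapping.lookup m i))"

text \<open>Extremal: the set of values v(F(a)), a in O^n, in Gamma \<union> {\<infinity>} (with v 0 = \<infinity>)
  has a maximum: either F has a zero in O^n (value \<infinity>), or some nonzero value is maximal.\<close>
definition extremal :: "('a::field \<Rightarrow> 'g::linordered_ab_group_add) \<Rightarrow> bool" where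
  "extremal v \<longleftrightarrow>
     (\<forall>n::nat. \<forall>F :: (nat \<Rightarrow>\<^sub>0 nat) \<Rightarrow>\<^sub>0 'a. n \<ge> 1 \<and> in_vars n F \<longrightarrow>
        (\<exists>a. (\<forall>i<n. a i \<in> val_ring v) \<and> mpeval F a = 0) \<or>
        (\<exists>a. (\<forall>i<n. a i \<in> val_ring v) \<and> mpeval F a \<noteq> 0 \<and>
           (\<forall>b. (\<forall>i<n. b i \<in> val_ring v) \<and> mpeval F b \<noteq> 0 \<longrightarrow> v (mpeval F b) \<le> v (mpeval F a))))"

definition convex_subgroup :: "'g::linordered_ab_group_add set \<Rightarrow> bool" where
  "convex_subgroup D \<longleftrightarrow>
     0 \<in> D \<and> (\<forall>x\<in>D. \<forall>y\<in>D. x + y \<in> D) \<and> (\<forall>x\<in>D. - x \<in> D) \<and>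
     (\<forall>x\<in>D. \<forall>y\<in>D. \<forall>z. x \<le> z \<and> z \<le> y \<longrightarrow> z \<in> D)"

definition quotient_divisible :: "'g::linordered_ab_group_add set \<Rightarrow> bool" where
  "quotient_divisible D \<longleftrightarrow>
     (\<forall>\<gamma>::'g. \<forall>n::nat. n \<ge> 1 \<longrightarrow> (\<exists>\<delta>. \<gamma> - (\<Sum>_<n. \<delta>) \<in> D))"

end

theory Submission imports Defs begin

definition mon :: "(nat \<Rightarrow>\<^sub>0 nat) \<Rightarrow> (nat \<Rightarrow> 'a::comm_semiring_1) \<Rightarrow> 'a" where
  "mon m p = (\<Prod>i \<in> Poly_Mapping.keys m. p i ^ Poly_Mapping.lookup m i)"

lemma mon_superset:
  assumes "Poly_Mapping.keys m \<subseteq> S" "finite S"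
  shows "mon m p = (\<Prod>i \<in> S. p i ^ Poly_Mapping.lookup m i)"
  unfolding mon_def
  by (rule prod.mono_neutral_left) (use assms in \<open>auto simp: in_keys_iff\<close>)

lemma mpeval_superset:
  assumes "Poly_Mapping.keys F \<subseteq> S" "finite S"
  shows "mpeval F p = (\<Sum>m \<in> S. Poly_Mapping.lookup F m * mon m p)"
  unfolding mpeval_def mon_def[symmetric]
  by (rule sum.mono_neutral_left) (use assms in \<open>auto simp: in_keys_iff\<close>)

lemma mpeval_add: "mpeval (F + G) p = mpeval F p + mpeval G p"
proof -
  let ?S = "Poly_Mapping.keys F \<union> Poly_Mapping.keys G"
  have "mpeval (F + G) p = (\<Sum>m \<in> ?S. Poly_Mapping.lookup (F + G) m * mon m p)"
    by (rule mpeval_superset) (auto dest: keys_add[THEN subsetD])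
  also have "\<dots> = (\<Sum>m \<in> ?S. Poly_Mapping.lookup F m * mon m p) + (\<Sum>m \<in> ?S. Poly_Mapping.lookup G m * mon m p)"
    by (simp add: lookup_add distrib_right sum.distrib)
  also have "\<dots> = mpeval F p + mpeval G p"
    by (subst (1 2) mpeval_superset[of _ ?S]) auto
  finally show ?thesis .
qed

lemma mpeval_zero: "mpeval 0 p = 0"
  by (simp add: mpeval_def)

lemma mpeval_sum: "mpeval (\<Sum>k\<in>A. G k) p = (\<Sum>k\<in>A. mpeval (G k) p)"
  by (induction A rule: infinite_finite_induct) (auto simp: mpeval_zero mpeval_add)

lemma mpeval_single: "mpeval (Poly_Mapping.single m c) p = c * mon m p"
  by (subst mpeval_superset[of _ "{m}"]) auto

definition monoXY :: "nat \<Rightarrow> nat \<Rightarrow> (nat \<Rightarrow>\<^sub>0 nat)" where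
  "monoXY i j = Poly_Mapping.single 0 i + Poly_Mapping.single 1 j"

lemma keys_monoXY: "Poly_Mapping.keys (monoXY i j) \<subseteq> {0,1}"
  unfolding monoXY_def using keys_add[of "Poly_Mapping.single 0 i" "Poly_Mapping.single 1 j"]
  by (auto split: if_splits simp del: One_nat_def)

lemma mon_monoXY: "mon (monoXY i j) p = p 0 ^ i * p 1 ^ j"
  by (subst mon_superset[OF keys_monoXY]) (auto simp: monoXY_def lookup_add lookup_single)

definition thepoly :: "nat \<Rightarrow> 'a::comm_ring_1 \<Rightarrow> 'a \<Rightarrow> ((nat \<Rightarrow>\<^sub>0 nat) \<Rightarrow>\<^sub>0 'a)" where
  "thepoly n c a = Poly_Mapping.single (monoXY n 0) 1 +
     (\<Sum>k\<le>n. Poly_Mapping.single (monoXY (n*k) k) (c * of_nat (n choose k) * (-a)^(n-k)))"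

lemma eval_thepoly: "mpeval (thepoly n c a) p = p 0 ^ n + c * (p 0 ^ n * p 1 - a) ^ n"
proof -
  have "(p 0 ^ n * p 1 - a) ^ n = (p 0 ^ n * p 1 + (-a)) ^ n" by simp
  also have "\<dots> = (\<Sum>k\<le>n. of_nat (n choose k) * (p 0 ^ n * p 1) ^ k * (-a) ^ (n - k))"
    by (rule binomial_ring)
  finally have *: "c * (p 0 ^ n * p 1 - a) ^ n = (\<Sum>k\<le>n. c * of_nat (n choose k) * (-a)^(n-k) * (p 0 ^ (n*k) * p 1 ^ k))"
    by (simp add: sum_distrib_left power_mult[symmetric] power_mult_distrib mult_ac)
  show ?thesis
    unfolding thepoly_def mpeval_add mpeval_sum mpeval_single mon_monoXY * by simp
qed

lemma in_vars_thepoly: "in_vars 2 (thepoly n c a)"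
proof -
  have "Poly_Mapping.keys (thepoly n c a) \<subseteq> {monoXY n 0} \<union> (\<Union>k\<le>n. {monoXY (n*k) k})"
  proof -
    have k1: "Poly_Mapping.keys (Poly_Mapping.single (monoXY n 0) (1::'a)) \<subseteq> {monoXY n 0}" by simp
    have k2: "Poly_Mapping.keys (\<Sum>k\<le>n. Poly_Mapping.single (monoXY (n*k) k) (c * of_nat (n choose k) * (-a)^(n-k)))
       \<subseteq> (\<Union>k\<le>n. {monoXY (n*k) k})"
      using keys_sum[of "\<lambda>k. Poly_Mapping.single (monoXY (n*k) k) (c * of_nat (n choose k) * (-a)^(n-k))" "{..n}"]
      by auto
    show ?thesis unfolding thepoly_def by (rule subset_trans[OF keys_add Un_mono[OF k1 k2]])
  qed
  moreover have "Poly_Mapping.keys m \<subseteq> {..<2}" if "m \<in> {monoXY n 0} \<union> (\<Union>k\<le>n. {monoXY (n*k) k})" for m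
  proof -
    from that obtain i j where "m = monoXY i j" by blast
    then show ?thesis using keys_monoXY[of i j] by auto
  qed
  ultimately show ?thesis unfolding in_vars_def by blast
qed

abbreviation nsm :: "nat \<Rightarrow> 'g::linordered_ab_group_add \<Rightarrow> 'g" where
  "nsm k g \<equiv> (\<Sum>_<k. g)"

lemma nsm_Suc: "nsm (Suc k) g = nsm k g + g" by simp
lemma nsm_add: "nsm k (g + h) = nsm k g + nsm k h" by (simp add: sum.distrib)
lemma nsm_diff: "nsm k (g - h) = nsm k g - nsm k h" by (simp add: sum_subtractf)
lemma nsm_neg: "nsm k (- g) = - nsm k g" by (simp add: sum_negf)
lemma nsm_pos: "0 < g \<Longrightarrow> 1 \<le> k \<Longrightarrow> 0 < nsm k g"
  by (rule sum_pos) (auto simp: lessThan_empty_iff)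
lemma nsm_nonneg: "0 \<le> g \<Longrightarrow> 0 \<le> nsm k g"
  by (rule sum_nonneg) auto

lemma nsm_in: "convex_subgroup D \<Longrightarrow> g \<in> D \<Longrightarrow> nsm k g \<in> D"
proof (induction k)
  case 0 then show ?case by (simp add: convex_subgroup_def)
next
  case (Suc k)
  have cl: "\<And>x y. x \<in> D \<Longrightarrow> y \<in> D \<Longrightarrow> x + y \<in> D" using Suc.prems(1) unfolding convex_subgroup_def by blast
  show ?case unfolding nsm_Suc by (rule cl[OF Suc.IH[OF Suc.prems] Suc.prems(2)])
qed

context
  fixes v :: "'a::field \<Rightarrow> 'g::linordered_ab_group_add"
  assumes val: "valuation v"
begin

lemma v_mult: "x \<noteq> 0 \<Longrightarrow> y \<noteq> 0 \<Longrightarrow> v (x * y) = v x + v y"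
  using val unfolding valuation_def by blast

lemma v_tri: "x \<noteq> 0 \<Longrightarrow> y \<noteq> 0 \<Longrightarrow> x + y \<noteq> 0 \<Longrightarrow> min (v x) (v y) \<le> v (x + y)"
  using val unfolding valuation_def by blast

lemma v_surj: "\<exists>x. x \<noteq> 0 \<and> v x = g"
proof -
  have "g \<in> v ` (UNIV - {0})" using val unfolding valuation_def by blast
  then show ?thesis by blast
qed

lemma v_one: "v 1 = 0"
  using v_mult[of 1 1] by simp

lemma v_mone: "v (-1) = 0"
proof -
  have "v 1 = v (-1) + v (-1)" using v_mult[of "-1" "-1"] by simp
  then have "v (-1) + v (-1) = 0" by (simp add: v_one)
  show ?thesis
  proof (cases "v (-1) < 0")
    case True then have "v (-1) + v (-1) < 0" by (simp add: add_neg_neg)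
    then show ?thesis using \<open>v (-1) + v (-1) = 0\<close> by simp
  next
    case False
    show ?thesis
    proof (rule ccontr)
      assume "v (-1) \<noteq> 0"
      moreover have "0 \<le> v (-1)" using False by (simp add: not_less)
      ultimately have "0 < v (-1)" by (simp add: order_le_less)
      then have "0 < v (-1) + v (-1)" using add_pos_pos by blast
      then show False using \<open>v (-1) + v (-1) = 0\<close> by simp
    qed
  qed
qed

lemma v_neg: "v (- x) = v x" if "x \<noteq> 0"
  using v_mult[of "-1" x] that by (simp add: v_mone)

lemma v_pow: "x \<noteq> 0 \<Longrightarrow> v (x ^ k) = nsm k (v x)"
  by (induction k) (auto simp: v_one v_mult add.commute)

lemma v_div: "x \<noteq> 0 \<Longrightarrow> y \<noteq> 0 \<Longrightarrow> v (x / y) = v x - v y"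
  using v_mult[of "x / y" y] by (simp add: algebra_simps)

lemma v_add_lt:
  assumes "x \<noteq> 0" "y \<noteq> 0" "v x < v y"
  shows "x + y \<noteq> 0 \<and> v (x + y) = v x"
proof -
  have nz: "x + y \<noteq> 0"
  proof
    assume "x + y = 0" then have "y = - x" by (simp add: eq_neg_iff_add_eq_0 add.commute)
    then show False using assms v_neg by auto
  qed
  have 1: "v x \<le> v (x + y)" using v_tri[OF assms(1,2) nz] assms by simp
  have "x = (x + y) + (- y)" by simp
  have 2: "min (v (x + y)) (v (- y)) \<le> v x"
    using v_tri[of "x + y" "- y"] nz assms by simp
  have 2: "min (v (x + y)) (v y) \<le> v x" using 2 v_neg[OF assms(2)] by simp
  show ?thesis
  proof (intro conjI nz)
    show "v (x + y) = v x"
    proof (rule ccontr)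
      assume "v (x + y) \<noteq> v x"
      then have lt: "v x < v (x + y)" using 1 by simp
      then have "v x < min (v (x + y)) (v y)" using assms(3) by simp
      then show False using 2 by (auto simp: min_le_iff_disj)
    qed
  qed
qed

lemma v_add_ne:
  assumes "x \<noteq> 0" "y \<noteq> 0" "v x \<noteq> v y"
  shows "x + y \<noteq> 0 \<and> v (x + y) = min (v x) (v y)"
proof (cases "v x < v y")
  case True then show ?thesis using v_add_lt[OF assms(1,2)] by simp
next
  case False then have "v y < v x" using assms by auto
  then show ?thesis using v_add_lt[OF assms(2,1)] by (simp add: add.commute)
qed

end

lemma exists_pos_theta:
  assumes D: "convex_subgroup D" and nd: "\<not> quotient_divisible D"
  obtains n :: nat and \<theta> :: "'g::linordered_ab_group_add" where "n \<ge> 1" "0 < \<theta>" "\<And>\<delta>. \<theta> - nsm n \<delta> \<notin> D"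
proof -
  obtain \<gamma> :: 'g and n :: nat where n1: "n \<ge> 1" and g: "\<And>\<delta>. \<gamma> - nsm n \<delta> \<notin> D"
    using nd unfolding quotient_divisible_def by blast
  have "\<gamma> \<noteq> 0" using g[of 0] D by (auto simp: convex_subgroup_def)
  show ?thesis
  proof (cases "0 < \<gamma>")
    case True then show ?thesis using that n1 g by blast
  next
    case False
    then have neg: "\<gamma> < 0" using \<open>\<gamma> \<noteq> 0\<close> by simp
    define \<theta> where "\<theta> = \<gamma> - nsm n \<gamma>"
    have th: "\<theta> - nsm n \<delta> \<notin> D" for \<delta>
      using g[of "\<gamma> + \<delta>"] by (simp add: \<theta>_def nsm_add algebra_simps)
    obtain m where m: "n = Suc m" using n1 by (cases n) auto
    have "nsm m \<gamma> \<le> 0" using neg by (intro sum_nonpos) auto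
    then have "0 \<le> \<theta>" unfolding \<theta>_def m nsm_Suc by simp
    moreover have "\<theta> \<noteq> 0" using th[of 0] D by (auto simp: convex_subgroup_def)
    ultimately have "0 < \<theta>" by simp
    then show ?thesis using that[OF n1 _ th] by blast
  qed
qed

theorem proposition3p5:
  fixes v :: "'a::field \<Rightarrow> 'g::linordered_ab_group_add"
    and D :: "'g set"
  assumes "valuation v"
    and "extremal v"
    and "convex_subgroup D"
    and "D \<noteq> {0}"
  shows "quotient_divisible D"
proof (rule ccontr)
  assume nd: "\<not> quotient_divisible D"
  note val = assms(1) and D = assms(3)
  obtain n :: nat and \<theta> :: 'g where n1: "n \<ge> 1" and th0: "0 < \<theta>" and th: "\<And>\<delta>. \<theta> - nsm n \<delta> \<notin> D"
    using exists_pos_theta[OF D nd] by blast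
  have D0: "0 \<in> D" using D by (simp add: convex_subgroup_def)
  obtain \<delta> where dD: "\<delta> \<in> D" and d0: "0 < \<delta>"
  proof -
    obtain e where "e \<in> D" "e \<noteq> 0" using assms(4) D0 by blast
    then show ?thesis using that D unfolding convex_subgroup_def
      by (metis neg_0_less_iff_less linorder_neqE)
  qed
  obtain a where a0: "a \<noteq> 0" and va: "v a = \<theta>" using v_surj[OF val] by blast
  obtain c where c0: "c \<noteq> 0" and vc: "v c = - (nsm n \<theta> + \<theta>)" using v_surj[OF val] by blast
  obtain d where d00: "d \<noteq> 0" and vd: "v d = \<delta>" using v_surj[OF val] by blast
  define F where "F = thepoly n c a"
  have ev: "mpeval F p = p 0 ^ n + c * (p 0 ^ n * p 1 - a) ^ n" for p
    unfolding F_def by (rule eval_thepoly)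
  have O_iff: "x \<in> val_ring v \<longleftrightarrow> x = 0 \<or> 0 \<le> v x" for x by (simp add: val_ring_def)
  have n0: "n \<noteq> 0" using n1 by simp
  have notn: "\<theta> \<noteq> nsm n \<alpha>" for \<alpha> using th[of \<alpha>] D0 by auto
  have A: "mpeval F p \<noteq> 0 \<and>
     ((p 0 \<noteq> 0 \<and> nsm n (v (p 0)) < \<theta> \<and> v (mpeval F p) \<le> nsm n (v (p 0))) \<or> v (mpeval F p) \<le> - \<theta>)"
    if p0: "p 0 \<in> val_ring v" and p1: "p 1 \<in> val_ring v" for p
  proof -
    define x where "x = p 0"
    define y where "y = p 1"
    define Q where "Q = x ^ n * y - a"
    have evx: "mpeval F p = x ^ n + c * Q ^ n" by (simp add: ev x_def y_def Q_def)
    show ?thesis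
    proof (cases "x = 0")
      case True
      then have "Q = - a" using n0 by (simp add: Q_def)
      then have e: "mpeval F p = c * (- a) ^ n" using True n0 by (simp add: evx)
      have "v (c * (- a) ^ n) = - \<theta>"
        using c0 a0 by (simp add: v_mult[OF val] v_pow[OF val] v_neg[OF val] va vc)
      then show ?thesis using e c0 a0 by simp
    next
      case xnz: False
      have vx: "0 \<le> v x" using p0 xnz O_iff x_def by auto
      have xn: "x ^ n \<noteq> 0" using xnz by simp
      have vxn: "v (x ^ n) = nsm n (v x)" using v_pow[OF val xnz] .
      show ?thesis
      proof (cases "Q = 0")
        case True
        then have e: "mpeval F p = x ^ n" using n0 by (simp add: evx)
        have "x ^ n * y = a" using True by (simp add: Q_def)
        then have ynz: "y \<noteq> 0" using a0 by auto
        have vy: "0 \<le> v y" using p1 ynz O_iff y_def by auto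
        have "\<theta> = nsm n (v x) + v y"
          using \<open>x ^ n * y = a\<close> v_mult[OF val xn ynz] va vxn by simp
        then have "nsm n (v x) \<le> \<theta>" using vy by simp
        then have "nsm n (v x) < \<theta>" using notn[of "v x"] by (simp add: order_le_less)
        then show ?thesis using e xn vxn xnz unfolding x_def
          by (intro conjI disjI1) auto
      next
        case Qnz: False
        have B0: "c * Q ^ n \<noteq> 0" using c0 Qnz by simp
        have vB: "v (c * Q ^ n) = v c + nsm n (v Q)"
          using c0 Qnz by (simp add: v_mult[OF val] v_pow[OF val])
        have ne: "v (x ^ n) \<noteq> v (c * Q ^ n)"
        proof
          assume "v (x ^ n) = v (c * Q ^ n)"
          then have h: "nsm n (v x) = - (nsm n \<theta> + \<theta>) + nsm n (v Q)" using vxn vB vc by simp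
          have grp: "\<And>X T t Q'. X = -(T+t)+Q' \<Longrightarrow> t - (Q' - X - T) = (0::'g)"
            by (simp add: algebra_simps)
          have "\<theta> - nsm n (v Q - v x - \<theta>) = 0"
            unfolding nsm_diff by (rule grp[OF h])
          then show False using th[of "v Q - v x - \<theta>"] D0 by simp
        qed
        from v_add_ne[OF val xn B0 ne]
        have F0: "mpeval F p \<noteq> 0" and vF: "v (mpeval F p) = min (v (x ^ n)) (v (c * Q ^ n))"
          by (auto simp: evx)
        show ?thesis
        proof (cases "nsm n (v x) < \<theta>")
          case True then show ?thesis using F0 vF vxn xnz unfolding x_def
            by (intro conjI disjI1) auto
        next
          case False
          then have gt: "\<theta> < nsm n (v x)" using notn[of "v x"] by auto
          have vQ: "v Q = \<theta>"
          proof (cases "y = 0")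
            case True then show ?thesis using a0 by (simp add: Q_def v_neg[OF val] va)
          next
            case ynz: False
            have vy: "0 \<le> v y" using p1 ynz O_iff y_def by auto
            have xy: "x ^ n * y \<noteq> 0" using xn ynz by simp
            have "\<theta> + 0 < nsm n (v x) + v y" using add_less_le_mono[OF gt vy] .
            then have "v (- a) < v (x ^ n * y)"
              using v_mult[OF val xn ynz] vxn v_neg[OF val a0] va by simp
            from v_add_lt[OF val _ xy this] a0
            have "v (- a + x ^ n * y) = v (- a)" by simp
            then show ?thesis by (simp add: Q_def v_neg[OF val a0] va)
          qed
          have "v (c * Q ^ n) = - \<theta>" using vB vQ vc by simp
          then show ?thesis using F0 vF by auto
        qed
      qed
    qed
  qed
  have B: "\<exists>p'. (\<forall>i<2. p' i \<in> val_ring v) \<and> mpeval F p' \<noteq> 0 \<and> nsm n (v x) < v (mpeval F p')"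
    if xnz: "x \<noteq> 0" and vx: "0 \<le> v x" and lt: "nsm n (v x) < \<theta>" for x
  proof -
    define x' where "x' = x * d"
    have x'nz: "x' \<noteq> 0" using xnz d00 by (simp add: x'_def)
    have vx': "v x' = v x + \<delta>" using v_mult[OF val xnz d00] vd by (simp add: x'_def)
    have lt2: "nsm n (v x) + nsm n \<delta> < \<theta>"
    proof (rule ccontr)
      assume "\<not> ?thesis"
      then have "\<theta> - nsm n (v x) \<le> nsm n \<delta>" by (simp add: algebra_simps)
      moreover have "0 \<le> \<theta> - nsm n (v x)" using lt by simp
      moreover have "nsm n \<delta> \<in> D" using nsm_in[OF D dD] .
      moreover have conv: "\<And>x y z. x\<in>D \<Longrightarrow> y\<in>D \<Longrightarrow> x \<le> z \<Longrightarrow> z \<le> y \<Longrightarrow> z \<in> D"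
        using D unfolding convex_subgroup_def by blast
      ultimately have "\<theta> - nsm n (v x) \<in> D" using D0 by blast
      then show False using th by blast
    qed
    have x'n: "x' ^ n \<noteq> 0" using x'nz by simp
    have vx'n: "v (x' ^ n) = nsm n (v x) + nsm n \<delta>" using v_pow[OF val x'nz] vx' by (simp add: nsm_add)
    define y' where "y' = a / x' ^ n"
    have y'nz: "y' \<noteq> 0" using a0 x'n by (simp add: y'_def)
    have vy': "v y' = \<theta> - (nsm n (v x) + nsm n \<delta>)" using v_div[OF val a0 x'n] va vx'n by (simp add: y'_def)
    define p' where "p' = (\<lambda>i::nat. if i = 0 then x' else y')"
    have "x' ^ n * y' - a = 0" using x'n by (simp add: y'_def)
    then have e: "mpeval F p' = x' ^ n" using n0 by (simp add: ev p'_def)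
    have "0 \<le> v x'" using vx' vx d0 by simp
    moreover have "0 \<le> v y'" using vy' lt2 by simp
    ultimately have inO: "\<forall>i<2. p' i \<in> val_ring v" using O_iff by (auto simp: p'_def less_2_cases_iff)
    have "0 < nsm n \<delta>" using nsm_pos[OF d0 n1] .
    then show ?thesis using inO e x'n vx'n by (intro exI[of _ p']) auto
  qed
  define p1 where "p1 = (\<lambda>i::nat. if i = 0 then (1::'a) else a)"
  have p1O: "\<forall>i<2. p1 i \<in> val_ring v" using va th0 v_one[OF val]
    by (auto simp: p1_def O_iff less_2_cases_iff)
  have p1v: "mpeval F p1 = 1" using n0 by (simp add: ev p1_def)
  have ext: "(\<exists>p. (\<forall>i<2. p i \<in> val_ring v) \<and> mpeval F p = 0) \<or>
        (\<exists>p. (\<forall>i<2. p i \<in> val_ring v) \<and> mpeval F p \<noteq> 0 \<and>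
           (\<forall>b. (\<forall>i<2. b i \<in> val_ring v) \<and> mpeval F b \<noteq> 0 \<longrightarrow> v (mpeval F b) \<le> v (mpeval F p)))"
  proof -
    have "\<forall>n::nat. \<forall>F :: (nat \<Rightarrow>\<^sub>0 nat) \<Rightarrow>\<^sub>0 'a. n \<ge> 1 \<and> in_vars n F \<longrightarrow>
        (\<exists>a. (\<forall>i<n. a i \<in> val_ring v) \<and> mpeval F a = 0) \<or>
        (\<exists>a. (\<forall>i<n. a i \<in> val_ring v) \<and> mpeval F a \<noteq> 0 \<and>
           (\<forall>b. (\<forall>i<n. b i \<in> val_ring v) \<and> mpeval F b \<noteq> 0 \<longrightarrow> v (mpeval F b) \<le> v (mpeval F a)))"
      using assms(2) unfolding extremal_def by blast
    then have "(1::nat) \<le> 2 \<and> in_vars 2 F \<longrightarrow>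
        (\<exists>a. (\<forall>i<2. a i \<in> val_ring v) \<and> mpeval F a = 0) \<or>
        (\<exists>a. (\<forall>i<2. a i \<in> val_ring v) \<and> mpeval F a \<noteq> 0 \<and>
           (\<forall>b. (\<forall>i<2. b i \<in> val_ring v) \<and> mpeval F b \<noteq> 0 \<longrightarrow> v (mpeval F b) \<le> v (mpeval F a)))"
      by blast
    moreover have "in_vars 2 F" unfolding F_def by (rule in_vars_thepoly)
    ultimately show ?thesis by simp
  qed
  then show False
  proof
    assume "\<exists>p. (\<forall>i<2. p i \<in> val_ring v) \<and> mpeval F p = 0"
    then obtain p where "\<forall>i<2. p i \<in> val_ring v" "mpeval F p = 0" by blast
    moreover have "p 0 \<in> val_ring v" "p 1 \<in> val_ring v" using calculation by auto
    ultimately show False using A[of p] by blast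
  next
    assume "\<exists>p. (\<forall>i<2. p i \<in> val_ring v) \<and> mpeval F p \<noteq> 0 \<and>
           (\<forall>b. (\<forall>i<2. b i \<in> val_ring v) \<and> mpeval F b \<noteq> 0 \<longrightarrow> v (mpeval F b) \<le> v (mpeval F p))"
    then obtain p where pO: "\<forall>i<2. p i \<in> val_ring v"
      and mx: "\<And>b. (\<forall>i<2. b i \<in> val_ring v) \<Longrightarrow> mpeval F b \<noteq> 0 \<Longrightarrow> v (mpeval F b) \<le> v (mpeval F p)"
      by blast
    have "p 0 \<in> val_ring v" "p 1 \<in> val_ring v" using pO by auto
    note Ap = A[OF this]
    then consider (a) "p 0 \<noteq> 0" "nsm n (v (p 0)) < \<theta>" "v (mpeval F p) \<le> nsm n (v (p 0))"
      | (b) "v (mpeval F p) \<le> - \<theta>" by blast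
    then show False
    proof cases
      case a
      have "0 \<le> v (p 0)" using \<open>p 0 \<in> val_ring v\<close> a(1) O_iff by auto
      from B[OF a(1) this a(2)] obtain p' where "\<forall>i<2. p' i \<in> val_ring v" "mpeval F p' \<noteq> 0"
        "nsm n (v (p 0)) < v (mpeval F p')" by blast
      then have "v (mpeval F p') \<le> v (mpeval F p)" using mx[of p'] by blast
      then show False using a(3) \<open>nsm n (v (p 0)) < v (mpeval F p')\<close> by simp
    next
      case b
      have "v (mpeval F p1) \<le> v (mpeval F p)" using mx[OF p1O] p1v by simp
      then have "v (mpeval F p1) \<le> - \<theta>" using b by (rule order_trans)
      then have "0 \<le> - \<theta>" using p1v v_one[OF val] by simp
      then show False using th0 by simp
    qed
  qed
qed

end
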